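(* Let $K$ be a field of characteristic zero and $n\ge1$, and regard $\mathbb{S}_n\subseteq{\rm End}_K(P_n)$. Then (1) $1+F_n\subseteq\mathcal{C}(P_n)_0$, and (2) $\mathbb{S}_n^*+F_n\subseteq\mathcal{C}(P_n)_0$.
   Context: $\mathbb{S}_n$ is the $K$-algebra generated by $x_1,\dots,x_n,y_1,\dots,y_n$ with defining relations $y_ix_i=1$ and $[x_i,y_j]=[x_i,x_j]=[y_i,y_j]=0$ for $i\ne j$; it acts faithfully on $P_n=K[x_1,\dots,x_n]$ by $x_i*x^\alpha=x^{\alpha+e_i}$, $y_i*x^\alpha=x^{\alpha-e_i}$ if $\alpha_i>0$ and $0$ otherwise. $F_n$ is the ideal of $\mathbb{S}_n$ spanned by all $\prod_{i=1}^n(x_i^{\alpha_i}y_i^{\beta_i}-x_i^{\alpha_i+1}y_i^{\beta_i+1})$, $\alpha,\beta\in\mathbb{N}^n$. $\mathbb{S}_n^*$ is the group of units of $\mathbb{S}_n$. $\mathcal{C}(P_n)_0$ is the set of $K$-linear maps $\varphi:P_n\to P_n$ with finite-dimensional kernel and cokernel and index ${\rm ind}(\varphi)=\dim\ker\varphi-\dim{\rm coker}\,\varphi=0$. *)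

theory Defs
  imports Complex_Main "HOL-Library.Poly_Mapping"
begin

(* P_n = K[x_i : i \<in> 'n]: finitely supported coefficient functions on monomials
   x^\<alpha>, \<alpha> :: 'n \<Rightarrow> nat.  The finite index type 'n plays the role of {1..n}
   (types are nonempty, so n \<ge> 1). *)
type_synonym ('n, 'k) Pn = "('n \<Rightarrow> nat) \<Rightarrow>\<^sub>0 'k"

definition scal :: "'k::field \<Rightarrow> ('n, 'k) Pn \<Rightarrow> ('n, 'k) Pn" where
  "scal c p = Poly_Mapping.map (\<lambda>a. c * a) p"

(* action of x_i:  x_i * x^\<alpha> = x^(\<alpha>+e_i) *)
definition Xop :: "'n \<Rightarrow> ('n, 'k::field) Pn \<Rightarrow> ('n, 'k) Pn" where
  "Xop i p = Abs_poly_mapping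
     (\<lambda>\<alpha>. if 0 < \<alpha> i then Poly_Mapping.lookup p (\<alpha>(i := \<alpha> i - 1)) else 0)"

(* action of y_i:  y_i * x^\<alpha> = x^(\<alpha>-e_i) if \<alpha>_i > 0, else 0 *)
definition Yop :: "'n \<Rightarrow> ('n, 'k::field) Pn \<Rightarrow> ('n, 'k) Pn" where
  "Yop i p = Abs_poly_mapping (\<lambda>\<alpha>. Poly_Mapping.lookup p (\<alpha>(i := Suc (\<alpha> i))))"

inductive_set Sn :: "(('n, 'k::field) Pn \<Rightarrow> ('n, 'k) Pn) set" where
  Sn_id: "id \<in> Sn"
| Sn_X: "Xop i \<in> Sn"
| Sn_Y: "Yop i \<in> Sn"
| Sn_add: "f \<in> Sn \<Longrightarrow> g \<in> Sn \<Longrightarrow> (\<lambda>p. f p + g p) \<in> Sn"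
| Sn_scal: "f \<in> Sn \<Longrightarrow> (\<lambda>p. scal c (f p)) \<in> Sn"
| Sn_comp: "f \<in> Sn \<Longrightarrow> g \<in> Sn \<Longrightarrow> f \<circ> g \<in> Sn"

definition Sn_units :: "(('n, 'k::field) Pn \<Rightarrow> ('n, 'k) Pn) set" where
  "Sn_units = {u \<in> Sn. \<exists>v \<in> Sn. u \<circ> v = id \<and> v \<circ> u = id}"

definition Ffactor :: "'n \<Rightarrow> nat \<Rightarrow> nat \<Rightarrow> ('n, 'k::field) Pn \<Rightarrow> ('n, 'k) Pn" where
  "Ffactor i a b = (\<lambda>p. (Xop i ^^ a) ((Yop i ^^ b) p)
                        - (Xop i ^^ Suc a) ((Yop i ^^ Suc b) p))"

(* the product over i of the factors (they commute pairwise) *)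
definition Fgen :: "('n::finite \<Rightarrow> nat) \<Rightarrow> ('n \<Rightarrow> nat) \<Rightarrow> ('n, 'k::field) Pn \<Rightarrow> ('n, 'k) Pn" where
  "Fgen \<alpha> \<beta> = Finite_Set.fold (\<lambda>i f. Ffactor i (\<alpha> i) (\<beta> i) \<circ> f) id UNIV"

inductive_set Fn :: "(('n::finite, 'k::field) Pn \<Rightarrow> ('n, 'k) Pn) set" where
  Fn_zero: "(\<lambda>p. 0) \<in> Fn"
| Fn_gen: "Fgen \<alpha> \<beta> \<in> Fn"
| Fn_add: "f \<in> Fn \<Longrightarrow> g \<in> Fn \<Longrightarrow> (\<lambda>p. f p + g p) \<in> Fn"
| Fn_scal: "f \<in> Fn \<Longrightarrow> (\<lambda>p. scal c (f p)) \<in> Fn"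

definition fin_dim :: "('n, 'k::field) Pn set \<Rightarrow> bool" where
  "fin_dim W \<longleftrightarrow> (\<exists>B. finite B \<and> Modules.module.span scal B = W)"

(* complements of the image of \<phi>; P_n / im \<phi> \<cong> W for any such W *)
definition is_coker_compl :: "(('n, 'k::field) Pn \<Rightarrow> ('n, 'k) Pn) \<Rightarrow> ('n, 'k) Pn set \<Rightarrow> bool" where
  "is_coker_compl \<phi> W \<longleftrightarrow> Modules.module.subspace scal W \<and> W \<inter> \<phi> ` UNIV = {0}
      \<and> (\<forall>p. \<exists>w\<in>W. \<exists>q. p = w + \<phi> q)"

definition ker :: "(('n, 'k::field) Pn \<Rightarrow> ('n, 'k) Pn) \<Rightarrow> ('n, 'k) Pn set" where
  "ker \<phi> = {p. \<phi> p = 0}"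

definition dim_ker :: "(('n, 'k::field) Pn \<Rightarrow> ('n, 'k) Pn) \<Rightarrow> nat" where
  "dim_ker \<phi> = Vector_Spaces.vector_space.dim scal (ker \<phi>)"

definition dim_coker :: "(('n, 'k::field) Pn \<Rightarrow> ('n, 'k) Pn) \<Rightarrow> nat" where
  "dim_coker \<phi> = Vector_Spaces.vector_space.dim scal (SOME W. is_coker_compl \<phi> W)"

definition C0 :: "(('n, 'k::field) Pn \<Rightarrow> ('n, 'k) Pn) set" where
  "C0 = {\<phi>. Vector_Spaces.linear scal scal \<phi>
          \<and> fin_dim (ker \<phi>)
          \<and> (\<exists>W. is_coker_compl \<phi> W \<and> fin_dim W)
          \<and> int (dim_ker \<phi>) - int (dim_coker \<phi>) = 0}"

end

theory Submission
  imports Defs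
begin


lemma lookup_scal[simp]: "Poly_Mapping.lookup (scal c p) k = c * Poly_Mapping.lookup p k"
  by (simp add: scal_def Poly_Mapping.map.rep_eq when_def)

interpretation VS: vector_space "scal :: 'k::field \<Rightarrow> ('n, 'k) Pn \<Rightarrow> _"
  by unfold_locales (auto intro!: poly_mapping_eqI simp: lookup_add algebra_simps)

lemma fin_Xop: fixes p :: "('n, 'k::zero) Pn" shows "finite {\<alpha>. (if 0 < \<alpha> i then Poly_Mapping.lookup p (\<alpha>(i := \<alpha> i - 1)) else 0) \<noteq> 0}"
proof -
  have "{\<alpha>. (if 0 < \<alpha> i then Poly_Mapping.lookup p (\<alpha>(i := \<alpha> i - 1)) else 0) \<noteq> 0}
     \<subseteq> (\<lambda>\<beta>. \<beta>(i := Suc (\<beta> i))) ` Poly_Mapping.keys p"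
  proof
    fix \<alpha> assume a: "\<alpha> \<in> {\<alpha>. (if 0 < \<alpha> i then Poly_Mapping.lookup p (\<alpha>(i := \<alpha> i - 1)) else 0) \<noteq> 0}"
    then have "0 < \<alpha> i" "\<alpha>(i := \<alpha> i - 1) \<in> Poly_Mapping.keys p" by (auto simp: in_keys_iff split: if_splits)
    moreover have "\<alpha> = (\<alpha>(i := \<alpha> i - 1))(i := Suc ((\<alpha>(i := \<alpha> i - 1)) i))"
      using \<open>0 < \<alpha> i\<close> by auto
    ultimately show "\<alpha> \<in> (\<lambda>\<beta>. \<beta>(i := Suc (\<beta> i))) ` Poly_Mapping.keys p" by blast
  qed
  then show ?thesis by (rule finite_subset) simp
qed

lemma fin_Yop: fixes p :: "('n, 'k::zero) Pn" shows "finite {\<alpha>. Poly_Mapping.lookup p (\<alpha>(i := Suc (\<alpha> i))) \<noteq> 0}"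
proof -
  have "{\<alpha>. Poly_Mapping.lookup p (\<alpha>(i := Suc (\<alpha> i))) \<noteq> 0} \<subseteq> (\<lambda>\<beta>. \<beta>(i := \<beta> i - 1)) ` Poly_Mapping.keys p"
  proof
    fix \<alpha> assume "\<alpha> \<in> {\<alpha>. Poly_Mapping.lookup p (\<alpha>(i := Suc (\<alpha> i))) \<noteq> 0}"
    then have "\<alpha>(i := Suc (\<alpha> i)) \<in> Poly_Mapping.keys p" by (simp add: in_keys_iff)
    moreover have "\<alpha> = (\<alpha>(i := Suc (\<alpha> i)))(i := (\<alpha>(i := Suc (\<alpha> i))) i - 1)" by auto
    ultimately show "\<alpha> \<in> (\<lambda>\<beta>. \<beta>(i := \<beta> i - 1)) ` Poly_Mapping.keys p" by blast
  qed
  then show ?thesis by (rule finite_subset) simp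
qed

lemma lookup_Xop: "Poly_Mapping.lookup (Xop i p) \<alpha> = (if 0 < \<alpha> i then Poly_Mapping.lookup p (\<alpha>(i := \<alpha> i - 1)) else 0)"
  unfolding Xop_def using fin_Xop[of i p] by simp

lemma lookup_Yop: "Poly_Mapping.lookup (Yop i p) \<alpha> = Poly_Mapping.lookup p (\<alpha>(i := Suc (\<alpha> i)))"
  unfolding Yop_def using fin_Yop[of p i] by simp

lemma lookup_Xpow: "Poly_Mapping.lookup ((Xop i ^^ a) p) \<alpha> = (if a \<le> \<alpha> i then Poly_Mapping.lookup p (\<alpha>(i := \<alpha> i - a)) else 0)"
proof (induction a arbitrary: \<alpha>)
  case 0 then show ?case by simp
next
  case (Suc a)
  show ?case
    by (auto simp: lookup_Xop Suc.IH fun_upd_def intro!: arg_cong[where f="Poly_Mapping.lookup p"])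
qed

lemma lookup_Ypow: "Poly_Mapping.lookup ((Yop i ^^ b) p) \<alpha> = Poly_Mapping.lookup p (\<alpha>(i := \<alpha> i + b))"
proof (induction b arbitrary: \<alpha>)
  case 0 then show ?case by simp
next
  case (Suc b)
  show ?case
    by (auto simp: lookup_Yop Suc.IH fun_upd_def intro!: arg_cong[where f="Poly_Mapping.lookup p"])
qed

lemma lookup_Ffactor: "Poly_Mapping.lookup (Ffactor i a b p) \<gamma> = (if \<gamma> i = a then Poly_Mapping.lookup p (\<gamma>(i := b)) else 0)"
  unfolding Ffactor_def lookup_minus lookup_Xpow lookup_Ypow
  by (auto simp: fun_upd_def fun_eq_iff intro!: arg_cong[where f="Poly_Mapping.lookup p"])

lemma Ffactor_comm: "i \<noteq> j \<Longrightarrow> Ffactor i a b (Ffactor j c d p) = Ffactor j c d (Ffactor i a b p)"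
  by (rule poly_mapping_eqI) (auto simp: lookup_Ffactor fun_upd_twist)

lemma cfc_F: "comp_fun_commute (\<lambda>i f. Ffactor i (\<alpha> i) (\<beta> i) \<circ> f)"
proof
  fix x y
  show "(\<lambda>f. Ffactor y (\<alpha> y) (\<beta> y) \<circ> f) \<circ> (\<lambda>f. Ffactor x (\<alpha> x) (\<beta> x) \<circ> f)
      = (\<lambda>f. Ffactor x (\<alpha> x) (\<beta> x) \<circ> f) \<circ> (\<lambda>f. Ffactor y (\<alpha> y) (\<beta> y) \<circ> f)"
  proof (cases "x = y")
    case False
    then show ?thesis by (simp add: fun_eq_iff Ffactor_comm)
  qed simp
qed

lemma lookup_fold_F:
  assumes "finite S"
  shows "Poly_Mapping.lookup (Finite_Set.fold (\<lambda>i f. Ffactor i (\<alpha> i) (\<beta> i) \<circ> f) id S p) \<gamma>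
     = (if \<forall>i\<in>S. \<gamma> i = \<alpha> i then Poly_Mapping.lookup p (\<lambda>j. if j \<in> S then \<beta> j else \<gamma> j) else 0)"
  using assms
proof (induction S arbitrary: \<gamma> rule: finite_induct)
  case empty
  then show ?case by simp
next
  case (insert x A)
  interpret comp_fun_commute "\<lambda>i f. Ffactor i (\<alpha> i) (\<beta> i) \<circ> f" by (rule cfc_F)
  have e: "(\<lambda>j. if j \<in> A then \<beta> j else (\<gamma>(x := \<beta> x)) j) = (\<lambda>j. if j \<in> insert x A then \<beta> j else \<gamma> j)"
    using insert.hyps by (auto simp: fun_eq_iff)
  have "\<forall>i\<in>A. (\<gamma>(x := \<beta> x)) i = \<gamma> i" using insert.hyps by auto
  moreover have eqF: "Finite_Set.fold (\<lambda>i f. Ffactor i (\<alpha> i) (\<beta> i) \<circ> f) id (insert x A) p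
     = Ffactor x (\<alpha> x) (\<beta> x) (Finite_Set.fold (\<lambda>i f. Ffactor i (\<alpha> i) (\<beta> i) \<circ> f) id A p)"
    using insert.hyps by (simp add: fold_insert)
  ultimately show ?case
    unfolding eqF lookup_Ffactor insert.IH using insert.hyps e by auto
qed

lemma lookup_Fgen:
  "Poly_Mapping.lookup (Fgen \<alpha> \<beta> p) \<gamma> = (if \<gamma> = \<alpha> then Poly_Mapping.lookup p \<beta> else 0)"
  unfolding Fgen_def lookup_fold_F[OF finite_UNIV] by (auto simp: fun_eq_iff)

abbreviation lin :: "(('n, 'k::field) Pn \<Rightarrow> ('n, 'k) Pn) \<Rightarrow> bool" where
  "lin f \<equiv> Vector_Spaces.linear scal scal f"

lemma linI:
  assumes "\<And>x y. f (x + y) = f x + f y" "\<And>c x. f (scal c x) = scal c (f x)"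
  shows "lin f"
  unfolding Vector_Spaces.linear_iff using assms VS.vector_space_axioms by blast

lemma linD:
  assumes "lin f"
  shows "f (x + y) = f x + f y" "f (scal c x) = scal c (f x)"
  using assms unfolding Vector_Spaces.linear_iff by blast+

lemma lin_Xop: "lin (Xop i)"
  by (rule linI; rule poly_mapping_eqI; simp add: lookup_Xop lookup_add)

lemma lin_Yop: "lin (Yop i)"
  by (rule linI; rule poly_mapping_eqI; simp add: lookup_Yop lookup_add)

lemma lin_Sn: "f \<in> Sn \<Longrightarrow> lin f"
proof (induction rule: Sn.induct)
  case Sn_id
  then show ?case by (rule linI) simp_all
next
  case (Sn_X i)
  then show ?case by (rule lin_Xop)
next
  case (Sn_Y i)
  then show ?case by (rule lin_Yop)
next
  case (Sn_add f g)
  then show ?case by (intro linI) (simp_all add: linD VS.scale_right_distrib)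
next
  case (Sn_scal f c)
  then show ?case by (intro linI) (simp_all add: linD VS.scale_right_distrib VS.scale_left_commute)
next
  case (Sn_comp f g)
  then show ?case by (intro linI) (simp_all add: linD)
qed

definition pr :: "('n \<Rightarrow> nat) set \<Rightarrow> ('n, 'k::field) Pn \<Rightarrow> ('n, 'k) Pn" where
  "pr N p = (\<Sum>\<alpha>\<in>N. scal (Poly_Mapping.lookup p \<alpha>) (Poly_Mapping.single \<alpha> 1))"

lemma lookup_pr: "finite N \<Longrightarrow> Poly_Mapping.lookup (pr N p) \<beta> = (if \<beta> \<in> N then Poly_Mapping.lookup p \<beta> else 0)"
proof -
  assume N: "finite N"
  have "Poly_Mapping.lookup (pr N p) \<beta> = (\<Sum>\<alpha>\<in>N. if \<alpha> = \<beta> then Poly_Mapping.lookup p \<alpha> else 0)"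
    unfolding pr_def lookup_sum by (intro sum.cong refl) (simp add: lookup_single when_def)
  also have "\<dots> = (if \<beta> \<in> N then Poly_Mapping.lookup p \<beta> else 0)"
    using N by (simp add: sum.delta')
  finally show ?thesis .
qed

lemma pr_pr: "finite N \<Longrightarrow> M \<subseteq> N \<Longrightarrow> pr M (pr N p) = pr M p"
proof -
  assume "finite N" "M \<subseteq> N"
  then show ?thesis unfolding pr_def[of M] by (intro sum.cong refl) (auto simp: lookup_pr)
qed

definition FinDep :: "(('n, 'k::field) Pn \<Rightarrow> ('n, 'k) Pn) \<Rightarrow> bool" where
  "FinDep f \<longleftrightarrow> (\<exists>M. finite M \<and> (\<forall>p. f p = f (pr M p)))"

lemma lin_Fgen: "lin (Fgen \<alpha> \<beta>)"
  by (rule linI; rule poly_mapping_eqI; simp add: lookup_Fgen lookup_add)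

lemma FinDep_Fgen: "FinDep (Fgen \<alpha> \<beta>)"
  unfolding FinDep_def
  by (rule exI[of _ "{\<beta>}"]) (auto intro!: poly_mapping_eqI simp: lookup_Fgen lookup_pr)

lemma Fn_props: "f \<in> Fn \<Longrightarrow> lin f \<and> FinDep f"
proof (induction rule: Fn.induct)
  case Fn_zero
  show ?case by (auto intro!: linI simp: FinDep_def)
next
  case (Fn_gen \<alpha> \<beta>)
  show ?case using lin_Fgen FinDep_Fgen by blast
next
  case (Fn_add f g)
  then obtain M1 M2 where M: "finite M1" "\<forall>p. f p = f (pr M1 p)" "finite M2" "\<forall>p. g p = g (pr M2 p)"
    unfolding FinDep_def by blast
  have "lin (\<lambda>p. f p + g p)" using Fn_add by (intro linI) (simp_all add: linD VS.scale_right_distrib)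
  moreover have "\<forall>p. f p + g p = f (pr (M1 \<union> M2) p) + g (pr (M1 \<union> M2) p)"
  proof
    fix p
    have "f (pr (M1 \<union> M2) p) = f p"
      using M by (metis pr_pr finite_UnI sup_ge1)
    moreover have "g (pr (M1 \<union> M2) p) = g p"
      using M by (metis pr_pr finite_UnI sup_ge2)
    ultimately show "f p + g p = f (pr (M1 \<union> M2) p) + g (pr (M1 \<union> M2) p)" by simp
  qed
  ultimately show ?case unfolding FinDep_def using M by blast
next
  case (Fn_scal f c)
  then show ?case unfolding FinDep_def
    by (auto intro!: linI simp: linD VS.scale_right_distrib VS.scale_left_commute)
qed




context vector_space begin

lemma span_disj_int:
  assumes ind: "independent B" and fB: "finite B" and ST: "S \<subseteq> B" "T \<subseteq> B" "S \<inter> T = {}"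
    and xS: "x \<in> span S" and xT: "x \<in> span T"
  shows "x = 0"
proof -
  have fS: "finite S" and fT: "finite T" using ST fB finite_subset by blast+
  obtain c where c: "x = (\<Sum>v\<in>S. c v *s v)" using xS span_finite[OF fS] by blast
  obtain d where d: "x = (\<Sum>v\<in>T. d v *s v)" using xT span_finite[OF fT] by blast
  define e where "e v = (if v \<in> S then c v else - d v)" for v
  have "(\<Sum>v\<in>S \<union> T. e v *s v) = (\<Sum>v\<in>S. e v *s v) + (\<Sum>v\<in>T. e v *s v)"
    using fS fT ST(3) by (rule sum.union_disjoint)
  also have "(\<Sum>v\<in>S. e v *s v) = x" unfolding c e_def by (intro sum.cong refl) simp
  also have "(\<Sum>v\<in>T. e v *s v) = - x" unfolding d e_def
    using ST(3) by (auto simp: sum_negf[symmetric] intro!: sum.cong)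
  finally have z: "(\<Sum>v\<in>S \<union> T. e v *s v) = 0" by simp
  have "\<forall>v\<in>S. c v = 0"
  proof
    fix v assume "v \<in> S"
    then have "e v = 0" using independentD[OF ind _ _ z] fS fT ST by blast
    then show "c v = 0" using \<open>v \<in> S\<close> by (simp add: e_def)
  qed
  then show ?thesis unfolding c by simp
qed

lemma dim_image_eq_gen:
  assumes lf: "Vector_Spaces.linear scale scale f"
    and fi: "inj_on f (span S)"
  shows "dim (f ` S) = dim S"
proof -
  have mh: "module_hom scale scale f" using lf module_hom_iff_linear by blast
  obtain B where B: "B \<subseteq> S" "independent B" "S \<subseteq> span B" "card B = dim S"
    using basis_exists[of S] by auto
  then have "span S = span B"
    using span_mono[of B S] span_mono[of S "span B"] span_span[of B] by auto
  moreover have "card (f ` B) = card B"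
    using assms card_image[of f B] inj_on_subset[of f "span S" B] B span_superset by auto
  moreover have "independent (f ` B)"
    using module_hom.independent_injective_image[OF mh B(2)] fi \<open>span S = span B\<close> by simp
  ultimately show ?thesis
    by (metis B(4) dim_eq_card_independent dim_span module_hom.span_image[OF mh])
qed

lemma compl_dim_eq:
  assumes R: "subspace R" and W: "subspace W" and W': "subspace W'"
    and i1: "W \<inter> R = {0}" and i2: "W' \<inter> R = {0}"
    and d1: "\<And>p. \<exists>w\<in>W. \<exists>r\<in>R. p = w + r"
    and d2: "\<And>p. \<exists>w\<in>W'. \<exists>r\<in>R. p = w + r"
  shows "dim W = dim W'"
proof -
  define pr where "pr p = (SOME w. w \<in> W \<and> p - w \<in> R)" for p
  have uniq: "w1 = w2" if "w1 \<in> W" "w2 \<in> W" "p - w1 \<in> R" "p - w2 \<in> R" for p w1 w2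
  proof -
    have "w1 - w2 \<in> W" using that W subspace_diff by blast
    moreover have "w1 - w2 = (p - w2) - (p - w1)" by simp
    then have "w1 - w2 \<in> R" using that R subspace_diff by metis
    ultimately have "w1 - w2 \<in> W \<inter> R" by blast
    then show ?thesis using i1 by simp
  qed
  have spec: "pr p \<in> W \<and> p - pr p \<in> R" for p
  proof -
    obtain w r where "w \<in> W" "r \<in> R" "p = w + r" using d1 by blast
    then have "\<exists>w. w \<in> W \<and> p - w \<in> R" by (intro exI[of _ w]) simp
    then show ?thesis unfolding pr_def by (rule someI_ex)
  qed
  have pr_eq: "pr p = w" if "w \<in> W" "p - w \<in> R" for p w
    using uniq[OF _ that(1) _ that(2)] spec by blast
  have lin: "Vector_Spaces.linear scale scale pr"
    unfolding Vector_Spaces.linear_iff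
  proof (intro conjI allI)
    show "vector_space scale" by unfold_locales
    show "vector_space scale" by unfold_locales
    fix x y
    show "pr (x + y) = pr x + pr y"
    proof (rule pr_eq)
      show "pr x + pr y \<in> W" using spec W subspace_add by blast
      have "x + y - (pr x + pr y) = (x - pr x) + (y - pr y)" by simp
      then show "x + y - (pr x + pr y) \<in> R" using spec R subspace_add by metis
    qed
  next
    fix c x
    show "pr (c *s x) = c *s pr x"
    proof (rule pr_eq)
      show "c *s pr x \<in> W" using spec W subspace_scale by blast
      have "c *s x - c *s pr x = c *s (x - pr x)" by (simp add: scale_right_diff_distrib)
      then show "c *s x - c *s pr x \<in> R" using spec R subspace_scale by metis
    qed
  qed
  have mh: "module_hom scale scale pr" using lin module_hom_iff_linear by blast
  have inj: "inj_on pr (span W')"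
  proof (rule inj_onI)
    fix a b assume a: "a \<in> span W'" and b: "b \<in> span W'" and e: "pr a = pr b"
    have "a - b \<in> W'" using a b W' subspace_diff span_eq_iff by metis
    moreover have "pr (a - b) = 0" using e module_hom.diff[OF mh] by simp
    then have "a - b \<in> R" using spec[of "a - b"] by simp
    ultimately have "a - b \<in> W' \<inter> R" by blast
    then have "a - b = 0" using i2 by simp
    then show "a = b" by simp
  qed
  have img: "pr ` W' = W"
  proof
    show "pr ` W' \<subseteq> W" using spec by auto
    show "W \<subseteq> pr ` W'"
    proof
      fix w assume w: "w \<in> W"
      obtain w' r where "w' \<in> W'" "r \<in> R" "w = w' + r" using d2 by blast
      then have "pr w' = w" using pr_eq[OF w, of w'] R subspace_neg by fastforce
      then show "w \<in> pr ` W'" using \<open>w' \<in> W'\<close> by blast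
    qed
  qed
  show ?thesis using dim_image_eq_gen[OF lin inj] img by simp
qed

end




definition VN :: "('n \<Rightarrow> nat) set \<Rightarrow> ('n, 'k::field) Pn set" where
  "VN N = {p. Poly_Mapping.keys p \<subseteq> N}"

lemma VN_subspace: "VS.subspace (VN N)"
  unfolding VS.subspace_def VN_def
  by (auto simp: in_keys_iff lookup_add) (metis add.right_neutral in_keys_iff subsetD)

lemma VN_span: "finite N \<Longrightarrow> VN N \<subseteq> VS.span ((\<lambda>\<alpha>. Poly_Mapping.single \<alpha> 1) ` N)"
proof
  fix p :: "('a, 'b) Pn" assume N: "finite N" and p: "p \<in> VN N"
  have "p = pr N p"
    using p N by (intro poly_mapping_eqI) (auto simp: lookup_pr VN_def in_keys_iff)
  also have "pr N p \<in> VS.span ((\<lambda>\<alpha>. Poly_Mapping.single \<alpha> 1) ` N)"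
    unfolding pr_def by (intro VS.span_sum VS.span_scale VS.span_base) auto
  finally show "p \<in> VS.span ((\<lambda>\<alpha>. Poly_Mapping.single \<alpha> 1) ` N)" .
qed

lemma pr_VN: "finite N \<Longrightarrow> pr N p \<in> VN N"
  by (auto simp: VN_def in_keys_iff lookup_pr split: if_splits)

lemma VN_zero: "finite N \<Longrightarrow> z \<in> VN N \<Longrightarrow> pr N z = 0 \<Longrightarrow> z = 0"
  by (rule poly_mapping_eqI) (metis (mono_tags, lifting) VN_def in_keys_iff lookup_pr lookup_zero mem_Collect_eq subset_eq)

lemma pr_diff_zero: "finite N \<Longrightarrow> pr N (p - pr N p) = 0"
  by (rule poly_mapping_eqI) (simp add: lookup_pr lookup_minus)

lemma linD0: "lin f \<Longrightarrow> f 0 = 0"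
  using linD(1)[of f 0 0] by simp

lemma linD_diff: "lin f \<Longrightarrow> f (x - y) = f x - f y"
  using linD(1)[of f "x - y" y] by (simp add: algebra_simps)

lemma core:
  fixes g :: "('n, 'k::field) Pn \<Rightarrow> ('n, 'k) Pn"
  assumes lg: "lin g" and N: "finite N" and gpr: "\<And>p. g p = g (pr N p)"
    and gk: "\<And>p. Poly_Mapping.keys (g p) \<subseteq> N"
  defines "h \<equiv> \<lambda>p. p + g p"
  shows "fin_dim (ker h) \<and> (\<exists>W. is_coker_compl h W \<and> fin_dim W \<and> VS.dim W = VS.dim (ker h))"
proof -
  let ?V = "VN N :: ('n, 'k) Pn set"
  let ?F = "(\<lambda>\<alpha>. Poly_Mapping.single \<alpha> (1::'k)) ` N"
  have fF: "finite ?F" using N by simp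
  have VF: "?V \<subseteq> VS.span ?F" by (rule VN_span[OF N])
  have lh: "lin h" unfolding h_def using lg by (intro linI) (simp_all add: linD VS.scale_right_distrib)
  have mh: "module_hom scal scal h" using lh module_hom_iff_linear by blast
  have gV: "g p \<in> ?V" for p using gk by (simp add: VN_def)
  have hV: "h v \<in> ?V" if "v \<in> ?V" for v
    unfolding h_def using VN_subspace gV that VS.subspace_add by blast
  have gz: "g (p - pr N p) = 0" for p
    using gpr[of "p - pr N p"] pr_diff_zero[OF N, of p] linD0[OF lg] by simp
  have hz: "h (p - pr N p) = p - pr N p" for p unfolding h_def gz by simp
  have hsplit: "h p = h (pr N p) + (p - pr N p)" for p
    using linD(1)[OF lh, of "pr N p" "p - pr N p"] hz[of p] by simp
  have kerV: "ker h \<subseteq> ?V"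
  proof
    fix p assume "p \<in> ker h"
    then have "p = - g p" unfolding ker_def h_def by (simp add: eq_neg_iff_add_eq_0)
    moreover have "- g p \<in> ?V" by (rule VS.subspace_neg[OF VN_subspace gV])
    ultimately show "p \<in> ?V" by simp
  qed
  have kersub: "VS.subspace (ker h)"
    unfolding ker_def using module_hom.subspace_kernel[OF mh] by simp
  obtain K where K: "K \<subseteq> ker h" "VS.independent K" "ker h \<subseteq> VS.span K" "card K = VS.dim (ker h)"
    using VS.basis_exists by blast
  have fK: "finite K" using VS.independent_span_bound[OF fF K(2)] K(1) kerV VF by blast
  have spK: "VS.span K = ker h"
    using K(1,3) VS.span_minimal[OF K(1) kersub] by blast
  have fdk: "fin_dim (ker h)" unfolding fin_dim_def using fK spK by blast
  obtain B where B: "K \<subseteq> B" "B \<subseteq> ?V" "VS.independent B" "?V \<subseteq> VS.span B"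
    using VS.maximal_independent_subset_extend[of K ?V] K(1,2) kerV by blast
  have fB: "finite B" using VS.independent_span_bound[OF fF B(3)] B(2) VF by blast
  have spanBV: "VS.span B = ?V"
    using B VS.span_minimal[OF B(2) VN_subspace] by blast
  define D where "D = h ` (B - K)"
  have injD: "inj_on h (VS.span (B - K))"
    unfolding module_hom.inj_on_iff_eq_0[OF mh VS.subspace_span]
  proof (intro ballI impI)
    fix x assume x: "x \<in> VS.span (B - K)" and hx: "h x = 0"
    then have "x \<in> VS.span K" using spK by (simp add: ker_def)
    then show "x = 0" using VS.span_disj_int[OF B(3) fB B(1), of "B - K"] x by blast
  qed
  have indD: "VS.independent D"
    unfolding D_def using module_hom.independent_injective_image[OF mh _ injD] B(3)
      VS.independent_mono by blast
  have cardD: "card D = card B - card K"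
    unfolding D_def using card_image[OF inj_on_subset[OF injD VS.span_superset]]
      card_Diff_subset[OF finite_subset[OF B(1) fB] B(1)] by simp
  have hB: "h ` VS.span B \<subseteq> VS.span D"
  proof -
    have "h ` B \<subseteq> VS.span D"
    proof
      fix y assume "y \<in> h ` B"
      then obtain b where b: "b \<in> B" "y = h b" by blast
      show "y \<in> VS.span D"
      proof (cases "b \<in> K")
        case True
        then have "y = 0" using b K(1) by (auto simp: ker_def)
        then show ?thesis by (simp add: VS.span_zero)
      next
        case False
        then show ?thesis using b by (auto simp: D_def intro: VS.span_base)
      qed
    qed
    then have "VS.span (h ` B) \<subseteq> VS.span D" using VS.span_minimal VS.subspace_span by blast
    then show ?thesis using module_hom.span_image[OF mh] by metis
  qed
  have DV: "D \<subseteq> ?V" unfolding D_def using B(2) hV by blast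
  obtain C where C: "D \<subseteq> C" "C \<subseteq> ?V" "VS.independent C" "?V \<subseteq> VS.span C"
    using VS.maximal_independent_subset_extend[of D ?V] indD DV by blast
  have fC: "finite C" using VS.independent_span_bound[OF fF C(3)] C(2) VF by blast
  have cardCB: "card C = card B"
    using VS.basis_card_eq_dim[OF C(2) C(4) C(3)] VS.basis_card_eq_dim[OF B(2) B(4) B(3)] by simp
  define W where "W = VS.span (C - D)"
  have dimW: "VS.dim W = VS.dim (ker h)"
  proof -
    have "VS.dim W = card (C - D)"
      unfolding W_def by (rule VS.dim_span_eq_card_independent) (use C(3) VS.independent_mono in blast)
    also have "\<dots> = card C - card D" using card_Diff_subset[OF finite_subset[OF C(1) fC] C(1)] .
    also have "\<dots> = card K" using cardD cardCB card_mono[OF fB B(1)] by simp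
    finally show ?thesis using K(4) by simp
  qed
  have WV: "W \<subseteq> ?V" unfolding W_def using C(2) VS.span_minimal[OF _ VN_subspace] by blast
  have compl: "is_coker_compl h W"
    unfolding is_coker_compl_def
  proof (intro conjI allI)
    show "VS.subspace W" unfolding W_def by simp
    show "W \<inter> range h = {0}"
    proof
      show "{0} \<subseteq> W \<inter> range h"
        using linD0[OF lh] unfolding W_def by (auto simp: VS.span_zero intro: range_eqI[of _ _ 0])
      show "W \<inter> range h \<subseteq> {0}"
      proof
        fix w assume "w \<in> W \<inter> range h"
        then obtain q where w: "w \<in> W" "w = h q" by blast
        let ?z = "q - pr N q"
        have wV: "w \<in> ?V" using w WV by blast
        have "?z = w - h (pr N q)" using hsplit[of q] w by simp
        moreover have "w - h (pr N q) \<in> ?V" by (rule VS.subspace_diff[OF VN_subspace wV hV[OF pr_VN[OF N]]])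
        ultimately have "?z \<in> ?V" by simp
        then have "?z = 0" using VN_zero[OF N] pr_diff_zero[OF N] by blast
        then have "w = h (pr N q)" using hsplit[of q] w by simp
        then have "w \<in> VS.span D" using hB pr_VN[OF N, of q] spanBV by blast
        moreover have "w \<in> VS.span (C - D)" using w W_def by simp
        ultimately have "w = 0" using VS.span_disj_int[OF C(3) fC C(1), of "C - D"] by blast
        then show "w \<in> {0}" by simp
      qed
    qed
    fix p
    have CD: "(C - D) \<union> D = C" using C(1) by blast
    have "pr N p \<in> VS.span ((C - D) \<union> D)" unfolding CD using C(4) pr_VN[OF N] by blast
    then obtain w d where wd: "w \<in> VS.span (C - D)" "d \<in> VS.span D" "pr N p = w + d"
      unfolding VS.span_Un by blast
    have "VS.span D = h ` VS.span (B - K)"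
      unfolding D_def using module_hom.span_image[OF mh] by metis
    then obtain v where v: "d = h v" using wd(2) by blast
    have "p = w + h (v + (p - pr N p))"
      using linD(1)[OF lh, of v "p - pr N p"] hz[of p] wd(3) v by (simp add: algebra_simps)
    then show "\<exists>w\<in>W. \<exists>q. p = w + h q" using wd(1) W_def by blast
  qed
  have "fin_dim W" unfolding fin_dim_def W_def using fC by blast
  then show ?thesis using fdk compl dimW by blast
qed




lemma C0_of:
  fixes \<phi> :: "('n, 'k::field) Pn \<Rightarrow> ('n, 'k) Pn"
  assumes l: "lin \<phi>" and fk: "fin_dim (ker \<phi>)" and cW: "is_coker_compl \<phi> W"
    and fW: "fin_dim W" and dW: "VS.dim W = VS.dim (ker \<phi>)"
  shows "\<phi> \<in> C0"
proof -
  have mh: "module_hom scal scal \<phi>" using l module_hom_iff_linear by blast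
  define W' where "W' = (SOME W. is_coker_compl \<phi> W)"
  have cW': "is_coker_compl \<phi> W'" unfolding W'_def by (rule someI) (rule cW)
  have R: "VS.subspace (range \<phi>)" using module_hom.subspace_image[OF mh VS.subspace_UNIV] .
  have "VS.dim W = VS.dim W'"
  proof (rule VS.compl_dim_eq[OF R])
    show "VS.subspace W" "W \<inter> range \<phi> = {0}" using cW unfolding is_coker_compl_def by blast+
    show "VS.subspace W'" "W' \<inter> range \<phi> = {0}" using cW' unfolding is_coker_compl_def by blast+
    show "\<exists>w\<in>W. \<exists>r\<in>range \<phi>. p = w + r" for p using cW unfolding is_coker_compl_def by blast
    show "\<exists>w\<in>W'. \<exists>r\<in>range \<phi>. p = w + r" for p using cW' unfolding is_coker_compl_def by blast
  qed
  then have "dim_coker \<phi> = dim_ker \<phi>" unfolding dim_coker_def dim_ker_def W'_def[symmetric] using dW by simp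
  then show ?thesis unfolding C0_def using l fk cW fW by auto
qed

lemma unit_plus:
  fixes u v f :: "('n, 'k::field) Pn \<Rightarrow> ('n, 'k) Pn"
  assumes lu: "lin u" and lv: "lin v" and uv: "\<And>p. u (v p) = p" and vu: "\<And>p. v (u p) = p"
    and lf: "lin f" and fd: "FinDep f"
  shows "(\<lambda>p. u p + f p) \<in> C0"
proof -
  define g where "g = (\<lambda>p. v (f p))"
  have lg: "lin g" unfolding g_def using lv lf by (intro linI) (simp_all add: linD)
  have mg: "module_hom scal scal g" using lg module_hom_iff_linear by blast
  have mu: "module_hom scal scal u" using lu module_hom_iff_linear by blast
  obtain M where M: "finite M" "\<And>p. f p = f (pr M p)" using fd unfolding FinDep_def by blast
  have gM: "g p = g (pr M p)" for p unfolding g_def using M(2) by metis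
  define N where "N = M \<union> (\<Union>\<alpha>\<in>M. Poly_Mapping.keys (g (Poly_Mapping.single \<alpha> 1)))"
  have N: "finite N" unfolding N_def using M(1) by simp
  have gexp: "g p = (\<Sum>\<alpha>\<in>M. scal (Poly_Mapping.lookup p \<alpha>) (g (Poly_Mapping.single \<alpha> 1)))" for p
    unfolding gM[of p] pr_def module_hom.sum[OF mg] module_hom.scale[OF mg] ..
  have gk: "Poly_Mapping.keys (g p) \<subseteq> N" for p
  proof
    fix \<beta> assume b: "\<beta> \<in> Poly_Mapping.keys (g p)"
    show "\<beta> \<in> N"
    proof (rule ccontr)
      assume "\<beta> \<notin> N"
      then have "\<forall>\<alpha>\<in>M. Poly_Mapping.lookup (g (Poly_Mapping.single \<alpha> 1)) \<beta> = 0"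
        unfolding N_def by (auto simp: in_keys_iff)
      then have "Poly_Mapping.lookup (g p) \<beta> = 0" unfolding gexp[of p] lookup_sum by simp
      then show False using b by (simp add: in_keys_iff)
    qed
  qed
  have gN: "g p = g (pr N p)" for p
    using gM[of p] gM[of "pr N p"] pr_pr[OF N, of M p] unfolding N_def by simp
  define h where "h = (\<lambda>p. p + g p)"
  obtain W where fk: "fin_dim (ker h)" and cW: "is_coker_compl h W" and fW: "fin_dim W"
    and dW: "VS.dim W = VS.dim (ker h)"
    using core[OF lg N gN gk] unfolding h_def by blast
  define \<phi> where "\<phi> = (\<lambda>p. u p + f p)"
  have phi: "\<phi> p = u (h p)" for p unfolding \<phi>_def h_def g_def using linD(1)[OF lu] uv by simp
  have u0: "u 0 = 0" using linD0[OF lu] .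
  have v0: "v 0 = 0" using linD0[OF lv] .
  have lphi: "lin \<phi>" unfolding \<phi>_def using lu lf by (intro linI) (simp_all add: linD VS.scale_right_distrib)
  have kereq: "ker \<phi> = ker h"
    unfolding ker_def phi by (metis u0 v0 vu)
  have injU: "inj_on u X" for X by (metis inj_onI vu)
  have c2: "is_coker_compl \<phi> (u ` W)"
    unfolding is_coker_compl_def
  proof (intro conjI allI)
    show "VS.subspace (u ` W)"
      using module_hom.subspace_image[OF mu] cW unfolding is_coker_compl_def by blast
    have W0: "0 \<in> W" using cW unfolding is_coker_compl_def by blast
    show "u ` W \<inter> range \<phi> = {0}"
    proof
      show "{0} \<subseteq> u ` W \<inter> range \<phi>"
        using W0 u0 linD0[OF lphi] by (auto intro: image_eqI[of _ _ 0] range_eqI[of _ _ 0])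
      show "u ` W \<inter> range \<phi> \<subseteq> {0}"
      proof
        fix x assume "x \<in> u ` W \<inter> range \<phi>"
        then obtain w q where w: "w \<in> W" "x = u w" "x = \<phi> q" by blast
        then have "w = h q" using phi vu by metis
        then have "w \<in> W \<inter> range h" using w by blast
        then have "w = 0" using cW unfolding is_coker_compl_def by blast
        then show "x \<in> {0}" using w u0 by simp
      qed
    qed
    fix p
    obtain w q where "w \<in> W" "v p = w + h q" using cW unfolding is_coker_compl_def by blast
    then have "p = u w + \<phi> q" using uv[of p] linD(1)[OF lu] phi by metis
    then show "\<exists>w\<in>u ` W. \<exists>q. p = w + \<phi> q" using \<open>w \<in> W\<close> by blast
  qed
  have f2: "fin_dim (u ` W)"
  proof -
    obtain B where "finite B" "VS.span B = W" using fW unfolding fin_dim_def by blast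
    then show ?thesis unfolding fin_dim_def using module_hom.span_image[OF mu, of B]
      by (intro exI[of _ "u ` B"]) simp
  qed
  have d2: "VS.dim (u ` W) = VS.dim (ker \<phi>)"
    using VS.dim_image_eq_gen[OF lu injU] dW kereq by simp
  have "\<phi> \<in> C0" using C0_of[OF lphi _ c2 f2 d2] fk kereq by simp
  then show ?thesis unfolding \<phi>_def .
qed

theorem corollary3p5:
  fixes dummy :: "('n::finite, 'k::field_char_0) Pn"
  shows "(\<forall>f \<in> (Fn :: (('n, 'k) Pn \<Rightarrow> ('n, 'k) Pn) set). (\<lambda>p. p + f p) \<in> C0)
       \<and> (\<forall>u \<in> (Sn_units :: (('n, 'k) Pn \<Rightarrow> ('n, 'k) Pn) set). \<forall>f \<in> Fn. (\<lambda>p. u p + f p) \<in> C0)"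
proof (intro conjI ballI)
  fix f :: "('n, 'k) Pn \<Rightarrow> ('n, 'k) Pn" assume "f \<in> Fn"
  then have "lin f" "FinDep f" using Fn_props by blast+
  moreover have "lin (\<lambda>p::('n, 'k) Pn. p)" by (rule linI) simp_all
  ultimately show "(\<lambda>p. p + f p) \<in> C0"
    using unit_plus[of "\<lambda>p. p" "\<lambda>p. p" f] by simp
next
  fix u f :: "('n, 'k) Pn \<Rightarrow> ('n, 'k) Pn" assume u: "u \<in> Sn_units" and f: "f \<in> Fn"
  then obtain v where v: "v \<in> Sn" "u \<circ> v = id" "v \<circ> u = id" and uS: "u \<in> Sn"
    unfolding Sn_units_def by blast
  have "lin f" "FinDep f" using Fn_props f by blast+
  moreover have "lin u" "lin v" using lin_Sn uS v(1) by blast+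
  moreover have "\<And>p. u (v p) = p" "\<And>p. v (u p) = p" using v(2,3) by (metis comp_apply id_apply)+
  ultimately show "(\<lambda>p. u p + f p) \<in> C0" using unit_plus by blast
qed


end
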